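(* Fix $(u_\pm,v_\pm)$ with $v_\pm>0$ and $u_->u_+$. For $\epsilon_1,\epsilon_2>0$ let $(u_*^{\epsilon_1\epsilon_2},v_*^{\epsilon_1\epsilon_2})$ be the intermediate state of the two-shock Riemann solution of the perturbed Brio system with data $(u_\pm,v_\pm)$. Then $\lim_{\epsilon_1,\epsilon_2\to0}v_*^{\epsilon_1\epsilon_2}=+\infty$.
   Context: Perturbed Brio system: $u_t+(\tfrac12u^2+\tfrac12\epsilon_1v^2)_x=0$, $v_t+(uv-\epsilon_2v)_x=0$, $\epsilon_1,\epsilon_2>0$, $v>0$, with Riemann data $(u,v)(0,x)=(u_-,v_-)$ for $x<0$, $(u_+,v_+)$ for $x>0$. A two-shock Riemann solution is one with an intermediate state $(u_*,v_* )$, $v_*>\max(v_-,v_+)$, $u_+<u_*<u_-$, such that $$u_*=u_-+(v_*-v_-)\frac{\epsilon_2-\sqrt{\epsilon_2^2+4\epsilon_1(v_*+v_-)^2}}{v_*+v_-},\qquad u_+=u_*+(v_+-v_* )\frac{\epsilon_2+\sqrt{\epsilon_2^2+4\epsilon_1(v_*+v_+)^2}}{v_*+v_+},$$ with shock speeds $\sigma_1=u_-+\frac{v_*(u_*-u_-)}{v_*-v_-}-\epsilon_2$ and $\sigma_2=u_++\frac{v_*(u_+-u_* )}{v_+-v_*}-\epsilon_2$; the solution equals $(u_-,v_-)$ for $x/t<\sigma_1$, $(u_*,v_* )$ for $\sigma_1<x/t<\sigma_2$, $(u_+,v_+)$ for $x/t>\sigma_2$. The limit $\epsilon_1,\epsilon_2\to0$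 is taken over parameters for which this two-shock solution exists. *)

theory Defs
  imports Complex_Main
begin

definition two_shock_state ::
  "real \<Rightarrow> real \<Rightarrow> real \<Rightarrow> real \<Rightarrow> real \<Rightarrow> real \<Rightarrow> real \<Rightarrow> real \<Rightarrow> bool" where
  "two_shock_state e1 e2 um vm up vp us vs \<longleftrightarrow>
     vs > max vm vp \<and> up < us \<and> us < um \<and>
     us = um + (vs - vm) * (e2 - sqrt (e2\<^sup>2 + 4 * e1 * (vs + vm)\<^sup>2)) / (vs + vm) \<and>
     up = us + (vp - vs) * (e2 + sqrt (e2\<^sup>2 + 4 * e1 * (vs + vp)\<^sup>2)) / (vs + vp)"

end

theory Submission
  imports Defs
begin

lemma sqrt_bound:
  assumes "e1 > 0" "e2 > 0" "w > 0"
  shows "sqrt (e2\<^sup>2 + 4 * e1 * w\<^sup>2) \<le> e2 + 2 * sqrt e1 * w"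
proof -
  have s2: "(sqrt e1)\<^sup>2 = e1" using assms by simp
  have "e2\<^sup>2 + 4 * e1 * w\<^sup>2 \<le> (e2 + 2 * sqrt e1 * w)\<^sup>2"
  proof -
    have ss: "sqrt e1 * sqrt e1 = e1" using assms by simp
    have "(e2 + 2 * sqrt e1 * w)\<^sup>2 = e2\<^sup>2 + 4 * e2 * w * sqrt e1 + 4 * (sqrt e1 * sqrt e1) * w\<^sup>2"
      by (simp add: power2_eq_square algebra_simps)
    also have "\<dots> = e2\<^sup>2 + 4 * e2 * w * sqrt e1 + 4 * e1 * w\<^sup>2" by (simp only: ss)
    finally show ?thesis using assms by simp
  qed
  moreover have "0 \<le> e2 + 2 * sqrt e1 * w" using assms by simp
  ultimately show ?thesis by (simp add: real_sqrt_le_iff real_le_lsqrt)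
qed

lemma key:
  assumes e: "e1 > 0" "e2 > 0" and v: "vm > 0" "vp > 0"
    and ts: "two_shock_state e1 e2 um vm up vp us vs"
  shows "um - up \<le> 2 * e2 + 4 * sqrt e1 * vs"
proof -
  define s where "s = sqrt e1"
  have s0: "s > 0" using e by (simp add: s_def)
  have vs: "vs > vm" "vs > vp" using ts by (auto simp: two_shock_state_def)
  define A where "A = sqrt (e2\<^sup>2 + 4 * e1 * (vs + vm)\<^sup>2)"
  define B where "B = sqrt (e2\<^sup>2 + 4 * e1 * (vs + vp)\<^sup>2)"
  have A: "A \<le> e2 + 2 * s * (vs + vm)" unfolding A_def s_def
    using sqrt_bound[of e1 e2 "vs+vm"] e v vs by simp
  have B: "B \<le> e2 + 2 * s * (vs + vp)" unfolding B_def s_def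
    using sqrt_bound[of e1 e2 "vs+vp"] e v vs by simp
  have eq1: "us = um + (vs - vm) * (e2 - A) / (vs + vm)"
    and eq2: "up = us + (vp - vs) * (e2 + B) / (vs + vp)"
    using ts by (auto simp: two_shock_state_def A_def B_def)
  have t1: "(vs - vm) * (A - e2) / (vs + vm) \<le> 2 * s * vs"
  proof -
    have "(vs - vm) * (A - e2) \<le> (vs - vm) * (2 * s * (vs + vm))"
      using A vs by (intro mult_left_mono) auto
    also have "\<dots> \<le> 2 * s * vs * (vs + vm)"
      using s0 v vs by (simp add: algebra_simps)
    finally show ?thesis using v vs by (simp add: divide_le_eq)
  qed
  have t2: "(vs - vp) * (e2 + B) / (vs + vp) \<le> 2 * e2 + 2 * s * vs"
  proof -
    have "(vs - vp) * (e2 + B) \<le> (vs - vp) * (2 * e2 + 2 * s * (vs + vp))"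
      using B vs by (intro mult_left_mono) auto
    also have "\<dots> \<le> (2 * e2 + 2 * s * vs) * (vs + vp)"
      using s0 v vs e by (simp add: algebra_simps)
    finally show ?thesis using v vs by (simp add: divide_le_eq)
  qed
  have "um - up = (vs - vm) * (A - e2) / (vs + vm) + (vs - vp) * (e2 + B) / (vs + vp)"
  proof -
    have "um - up = (um - us) + (us - up)" by simp
    also have "um - us = (vs - vm) * (A - e2) / (vs + vm)"
    proof -
      have "(vs - vm) * (A - e2) = - ((vs - vm) * (e2 - A))" by (simp add: algebra_simps)
      then show ?thesis using eq1 by (simp add: minus_divide_left[symmetric])
    qed
    also have "us - up = (vs - vp) * (e2 + B) / (vs + vp)"
    proof -
      have "(vs - vp) * (e2 + B) = - ((vp - vs) * (e2 + B))" by (simp add: algebra_simps)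
      then show ?thesis using eq2 by (simp add: minus_divide_left[symmetric])
    qed
    finally show ?thesis .
  qed
  then show ?thesis using t1 t2 unfolding s_def by linarith
qed

theorem lemma5p1:
  fixes um vm up vp :: real
  assumes "vm > 0" and "vp > 0" and "um > up"
  shows "\<forall>M::real. \<exists>\<delta>>0. \<forall>e1 e2 us vs.
           0 < e1 \<and> e1 < \<delta> \<and> 0 < e2 \<and> e2 < \<delta> \<and>
           two_shock_state e1 e2 um vm up vp us vs \<longrightarrow> vs > M"
proof
  fix M :: real
  define D where "D = um - up"
  define c where "c = D / (8 * (\<bar>M\<bar> + 1))"
  have D0: "D > 0" using assms by (simp add: D_def)
  have c0: "c > 0" using D0 by (simp add: c_def)
  show "\<exists>\<delta>>0. \<forall>e1 e2 us vs.
           0 < e1 \<and> e1 < \<delta> \<and> 0 < e2 \<and> e2 < \<delta> \<and>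
           two_shock_state e1 e2 um vm up vp us vs \<longrightarrow> vs > M"
  proof (intro exI[of _ "min (D/4) (c\<^sup>2)"] conjI allI impI)
    show "0 < min (D/4) (c\<^sup>2)" using D0 c0 by simp
    fix e1 e2 us vs
    assume h: "0 < e1 \<and> e1 < min (D/4) (c\<^sup>2) \<and> 0 < e2 \<and> e2 < min (D/4) (c\<^sup>2) \<and>
           two_shock_state e1 e2 um vm up vp us vs"
    have k: "D \<le> 2 * e2 + 4 * sqrt e1 * vs"
      using key[of e1 e2 vm vp um up us vs] h assms by (simp add: D_def)
    have sc: "sqrt e1 < c" using h c0 real_sqrt_less_mono[of e1 "c\<^sup>2"] by simp
    have s0: "sqrt e1 > 0" using h by simp
    have "D / 2 \<le> 4 * sqrt e1 * vs" using k h by linarith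
    then have vpos: "vs > 0" using D0 s0
      by (metis half_gt_zero_iff mult_pos_pos not_le mult_nonneg_nonpos order.strict_trans2 less_eq_real_def zero_less_numeral)
    have "D / 2 < 4 * c * vs" using \<open>D / 2 \<le> 4 * sqrt e1 * vs\<close> sc vpos by (smt (verit) mult_strict_right_mono)
    then have "D < 8 * c * vs" by linarith
    also have "8 * c = D / (\<bar>M\<bar> + 1)" unfolding c_def by (simp add: field_simps)
    finally have "D < D / (\<bar>M\<bar> + 1) * vs" .
    then have "D * (\<bar>M\<bar> + 1) < D * vs" by (simp add: field_simps)
    then have "\<bar>M\<bar> + 1 < vs" using D0 by simp
    then show "vs > M" by linarith
  qed
qed

end
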